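(* Let $X$, $Y$ be real Banach spaces, $\Omega$ a measure space, $Z:=L^2(\Omega)$, and $e:Y\to Z$ a linear continuous dense embedding. Let $f:X\to\mathbb{R}$ and $g:X\to Y$ be continuously Fréchet differentiable. Let $x\in X$ be a feasible point ($g(x)\le 0$) satisfying the AKKT conditions, with sequences $x^k\to x$ in $X$ and $(\lambda^k)\subset K_Y^+$ such that $f'(x^k)+g'(x^k)^*\lambda^k\to 0$ and $\langle\lambda^k,g_-(x^k)\rangle\to 0$. Then: (a) if the Zowe–Kurcyusz condition $g'(x)X+\operatorname{cone}(K_Y+g(x))=Y$ holds at $x$, then $(\lambda^k)$ is bounded in $Y^*$; (b) if moreover the map $y\mapsto|y|$ is well-defined and continuous on $Y$, the closed unit ball of $Y^*$ is weak-$*$ sequentially compact, and $(\lambda^k)$ is bounded in $Y^*$, then $x$ is a KKT point, i.e. there exists $\lambda\in K_Y^+$ with $f'(x)+g'(x)^*\lambda=0$, $g(x)\le 0$ and $\langle\lambda,g(x)\rangle=0$.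
   Context: The order on $Y$ is induced by $Z$: $K_Y:=\{y\in Y: e(y)\ge 0 \text{ a.e.}\}$, and $y\le 0$ means $-y\in K_Y$. $K_Y^+:=\{\mu\in Y^*:\langle\mu,y\rangle\ge 0\ \forall y\in K_Y\}$, with $\langle\cdot,\cdot\rangle$ the duality pairing of $Y^*$ and $Y$. For $y\in Y$, $|y|$, $y_+=\max\{y,0\}$, $y_-=\max\{-y,0\}$ are defined via the pointwise operations in $Z$ (the statement "well-defined on $Y$" means these land in $Y$); $g_-(x):=(g(x))_-$. $\operatorname{cone}(A)$ denotes the conical hull $\{t a: t\ge 0, a\in A\}$ of $A\subseteq Y$. *)

theory Defs
  imports "HOL-Analysis.Analysis"
begin

text \<open>Z = L^2(M). Elements of Z are represented by real functions on the space of M,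
  compared almost everywhere. The embedding e : Y -> Z is given on representatives.\<close>

definition L2_dense_embedding :: "'w measure \<Rightarrow> ('y::banach \<Rightarrow> 'w \<Rightarrow> real) \<Rightarrow> bool" where
  "L2_dense_embedding M e \<longleftrightarrow>
     (\<forall>y. e y \<in> borel_measurable M \<and> integrable M (\<lambda>w. (e y w)^2)) \<and>
     (\<forall>a b y z. AE w in M. e (a *\<^sub>R y + b *\<^sub>R z) w = a * e y w + b * e z w) \<and>
     (\<exists>C. \<forall>y. (\<integral>w. (e y w)^2 \<partial>M) \<le> C * (norm y)^2) \<and>
     (\<forall>y. (AE w in M. e y w = 0) \<longrightarrow> y = 0) \<and>
     (\<forall>h \<in> borel_measurable M. integrable M (\<lambda>w. (h w)^2) \<longrightarrow>
        (\<forall>\<epsilon>>0. \<exists>y. (\<integral>w. (e y w - h w)^2 \<partial>M) < \<epsilon>))"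

definition KY :: "'w measure \<Rightarrow> ('y \<Rightarrow> 'w \<Rightarrow> real) \<Rightarrow> 'y set" where
  "KY M e = {y. AE w in M. e y w \<ge> 0}"

definition Yle0 :: "'w measure \<Rightarrow> ('y::real_vector \<Rightarrow> 'w \<Rightarrow> real) \<Rightarrow> 'y \<Rightarrow> bool" where
  "Yle0 M e y \<longleftrightarrow> - y \<in> KY M e"

definition KY_plus :: "'w measure \<Rightarrow> ('y::real_normed_vector \<Rightarrow> 'w \<Rightarrow> real) \<Rightarrow> ('y \<Rightarrow>\<^sub>L real) set" where
  "KY_plus M e = {\<mu>. \<forall>y \<in> KY M e. blinfun_apply \<mu> y \<ge> 0}"

definition conical_hull :: "'y::real_vector set \<Rightarrow> 'y set" where
  "conical_hull A = {t *\<^sub>R a | t a. t \<ge> 0 \<and> a \<in> A}"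

definition dual_ball_weakstar_seq_compact :: "('y::real_normed_vector \<Rightarrow>\<^sub>L real) itself \<Rightarrow> bool" where
  "dual_ball_weakstar_seq_compact _ \<longleftrightarrow>
     (\<forall>\<mu> :: nat \<Rightarrow> ('y \<Rightarrow>\<^sub>L real). (\<forall>n. norm (\<mu> n) \<le> 1) \<longrightarrow>
        (\<exists>r \<mu>0. strict_mono r \<and> norm \<mu>0 \<le> 1 \<and>
           (\<forall>y. (\<lambda>n. blinfun_apply (\<mu> (r n)) y) \<longlonglongrightarrow> blinfun_apply \<mu>0 y)))"

end

theory Submission imports Defs begin

lemma uniform_bdd:
  fixes F :: "nat \<Rightarrow> ('a::banach \<Rightarrow>\<^sub>L real)"
  assumes pw: "\<And>y. \<exists>C. \<forall>j. \<bar>F j y\<bar> \<le> C"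
  shows "\<exists>M. \<forall>j. norm (F j) \<le> M"
proof -
  define S where "S n = {y. \<forall>j. \<bar>F j y\<bar> \<le> real n}" for n :: nat
  have clS: "closed (S n)" for n
  proof -
    have "S n = (\<Inter>j. {y. \<bar>F j y\<bar> \<le> real n})" by (auto simp: S_def)
    moreover have "closed {y. \<bar>F j y\<bar> \<le> real n}" for j
      by (intro closed_Collect_le continuous_intros)
    ultimately show ?thesis by auto
  qed
  have U0: "y \<in> (\<Union>n. S n)" for y
  proof -
    obtain C where C: "\<forall>j. \<bar>F j y\<bar> \<le> C" using pw by blast
    have "C \<le> real (nat \<lceil>C\<rceil>)" by linarith
    then have "y \<in> S (nat \<lceil>C\<rceil>)" using C unfolding S_def by (auto intro: order_trans)
    then show "y \<in> (\<Union>n. S n)" by blast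
  qed
  have U: "(\<Union>n. S n) = UNIV" using U0 by blast
  have "\<exists>n. interior (S n) \<noteq> {}"
  proof (rule ccontr)
    assume "\<not> ?thesis"
    then have "euclidean interior_of \<Union>(range S) = {}"
      by (intro Baire_category_alt) (auto simp: completely_metrizable_space_euclidean clS)
    then show False using U by simp
  qed
  then obtain n y0 where "y0 \<in> interior (S n)" by blast
  then obtain \<epsilon> where ep: "\<epsilon> > 0" "ball y0 \<epsilon> \<subseteq> S n"
    by (meson open_contains_ball open_interior interior_subset subset_trans)
  have y0S: "y0 \<in> S n" using ep by auto
  have bnd: "\<bar>F j z\<bar> \<le> (4 * real n / \<epsilon>) * norm z" for j z
  proof (cases "z = 0")
    case True then show ?thesis by simp
  next
    case False
    define c where "c = \<epsilon> / (2 * norm z)"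
    have c: "c > 0" using False ep by (simp add: c_def)
    have "norm (c *\<^sub>R z) = \<epsilon> / 2" using False ep by (simp add: c_def)
    then have "y0 + c *\<^sub>R z \<in> S n" using ep by (intro subsetD[OF ep(2)]) (simp add: dist_norm)
    then have "\<bar>F j (y0 + c *\<^sub>R z)\<bar> \<le> real n" unfolding S_def by blast
    moreover have "\<bar>F j y0\<bar> \<le> real n" using y0S unfolding S_def by blast
    moreover have "F j (y0 + c *\<^sub>R z) = F j y0 + c * F j z"
      by (simp add: blinfun.add_right blinfun.scaleR_right)
    ultimately have "c * \<bar>F j z\<bar> \<le> 2 * real n" using c by (simp add: abs_mult)
    then have "\<bar>F j z\<bar> \<le> 2 * real n / c" using c by (simp add: field_simps)
    also have "2 * real n / c = (4 * real n / \<epsilon>) * norm z" using False ep by (simp add: c_def field_simps)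
    finally show ?thesis .
  qed
  have "norm (F j) \<le> 4 * real n / \<epsilon>" for j
    by (rule norm_blinfun_bound) (use ep bnd in auto)
  then show ?thesis by blast
qed

theorem theorem5p5:
  fixes M :: "'w measure"
    and e :: "'y::banach \<Rightarrow> 'w \<Rightarrow> real"
    and f :: "'x::banach \<Rightarrow> real"
    and f' :: "'x \<Rightarrow> ('x \<Rightarrow>\<^sub>L real)"
    and g :: "'x \<Rightarrow> 'y"
    and g' :: "'x \<Rightarrow> ('x \<Rightarrow>\<^sub>L 'y)"
    and x :: 'x
    and xk :: "nat \<Rightarrow> 'x"
    and lam :: "nat \<Rightarrow> ('y \<Rightarrow>\<^sub>L real)"
    and gm :: "nat \<Rightarrow> 'y"
  assumes emb: "L2_dense_embedding M e"
    and f_diff: "\<And>z. (f has_derivative blinfun_apply (f' z)) (at z)"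
    and f'_cont: "continuous_on UNIV f'"
    and g_diff: "\<And>z. (g has_derivative blinfun_apply (g' z)) (at z)"
    and g'_cont: "continuous_on UNIV g'"
    and feasible: "Yle0 M e (g x)"
    and xk_lim: "xk \<longlonglongrightarrow> x"
    and lam_pos: "\<And>k. lam k \<in> KY_plus M e"
    and stat: "(\<lambda>k. f' (xk k) + (lam k o\<^sub>L g' (xk k))) \<longlonglongrightarrow> 0"
    and gm_def: "\<And>k. AE w in M. e (gm k) w = max (- e (g (xk k)) w) 0"
    and compl: "(\<lambda>k. blinfun_apply (lam k) (gm k)) \<longlonglongrightarrow> 0"
  shows "((range (blinfun_apply (g' x)) + conical_hull (KY M e + {g x}) = UNIV)
            \<longrightarrow> bounded (range lam))
       \<and> (((\<exists>a :: 'y \<Rightarrow> 'y. (\<forall>y. AE w in M. e (a y) w = \<bar>e y w\<bar>) \<and> continuous_on UNIV a)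
            \<and> dual_ball_weakstar_seq_compact TYPE('y \<Rightarrow>\<^sub>L real)
            \<and> bounded (range lam))
          \<longrightarrow> (\<exists>\<mu> \<in> KY_plus M e. f' x + (\<mu> o\<^sub>L g' x) = 0 \<and> Yle0 M e (g x)
                 \<and> blinfun_apply \<mu> (g x) = 0))"
proof -
  have lin: "AE w in M. e (a *\<^sub>R y + b *\<^sub>R z) w = a * e y w + b * e z w" for a b y z
    using emb[unfolded L2_dense_embedding_def, THEN conjunct2, THEN conjunct1] by blast
  have gplus: "g (xk k) + gm k \<in> KY M e" for k
  proof -
    have "AE w in M. e (g (xk k) + gm k) w \<ge> 0"
      using lin[of 1 "g (xk k)" 1 "gm k"] gm_def[of k] by eventually_elim auto
    then show ?thesis by (simp add: KY_def)
  qed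
  have gmx: "- g x \<in> KY M e" using feasible by (simp add: Yle0_def)
  have lampos: "y \<in> KY M e \<Longrightarrow> lam k y \<ge> 0" for k y using lam_pos[of k] by (auto simp: KY_plus_def)
  have gcont: "isCont g z" for z using g_diff has_derivative_continuous by blast
  have gxk: "(\<lambda>k. g (xk k)) \<longlonglongrightarrow> g x" using gcont xk_lim isCont_tendsto_compose by blast
  have g'xk: "(\<lambda>k. g' (xk k)) \<longlonglongrightarrow> g' x"
    by (rule continuous_on_tendsto_compose[OF g'_cont xk_lim]) auto
  have f'xk: "(\<lambda>k. f' (xk k)) \<longlonglongrightarrow> f' x"
    by (rule continuous_on_tendsto_compose[OF f'_cont xk_lim]) auto
  have lgx: "lam k (g x) \<ge> - lam k (gm k) - norm (lam k) * norm (g x - g (xk k))" for k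
  proof -
    have "lam k (g x) = lam k (g (xk k) + gm k) - lam k (gm k) + lam k (g x - g (xk k))"
      by (simp add: blinfun.add_right blinfun.diff_right)
    moreover have "lam k (g (xk k) + gm k) \<ge> 0" using lampos gplus by blast
    moreover have "\<bar>lam k (g x - g (xk k))\<bar> \<le> norm (lam k) * norm (g x - g (xk k))"
      using norm_blinfun[of "lam k" "g x - g (xk k)"] by simp
    ultimately show ?thesis by linarith
  qed
  show ?thesis
  proof (intro conjI impI)
    assume ZK: "range (blinfun_apply (g' x)) + conical_hull (KY M e + {g x}) = UNIV"
    obtain Bs where Bs: "Bs > 0" "\<And>k. norm (f' (xk k) + (lam k o\<^sub>L g' (xk k))) \<le> Bs"
      using convergent_imp_Bseq[OF convergentI[OF stat]] unfolding Bseq_def by blast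
    obtain Bf where Bf: "Bf > 0" "\<And>k. norm (f' (xk k)) \<le> Bf"
      using convergent_imp_Bseq[OF convergentI[OF f'xk]] unfolding Bseq_def by blast
    obtain Bc where Bc: "Bc > 0" "\<And>k. norm (lam k (gm k)) \<le> Bc"
      using convergent_imp_Bseq[OF convergentI[OF compl]] unfolding Bseq_def by blast
    define B where "B = Bs + Bf + Bc + 1"
    have B: "B > 0" "Bs + Bf \<le> B" "Bc \<le> B" using Bs Bf Bc by (auto simp: B_def)
    define eps where "eps k = norm (g' x - g' (xk k)) + norm (g x - g (xk k))" for k
    have eps0: "eps k \<ge> 0" for k by (simp add: eps_def)
    have epsl: "eps \<longlonglongrightarrow> 0"
    proof -
      have a: "(\<lambda>k. g' x - g' (xk k)) \<longlonglongrightarrow> g' x - g' x"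
        by (intro tendsto_diff tendsto_const) fact
      have b: "(\<lambda>k. g x - g (xk k)) \<longlonglongrightarrow> g x - g x"
        by (intro tendsto_diff tendsto_const) fact
      have "(\<lambda>k. norm (g' x - g' (xk k)) + norm (g x - g (xk k))) \<longlonglongrightarrow> 0 + 0"
        using a b by (intro tendsto_add tendsto_norm_zero) auto
      then show ?thesis by (simp add: eps_def[abs_def])
    qed
    have key: "lam k (g' x d + t *\<^sub>R (kk + g x)) \<ge> - ((norm d + t) * (B + norm (lam k) * eps k))"
      if t: "t \<ge> 0" and kk: "kk \<in> KY M e" for k d t kk
    proof -
      define L where "L = norm (lam k)"
      have L0: "L \<ge> 0" by (simp add: L_def)
      have nc: "norm (lam k o\<^sub>L g' (xk k)) \<le> Bs + Bf"
      proof -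
        have "lam k o\<^sub>L g' (xk k) = (f' (xk k) + (lam k o\<^sub>L g' (xk k))) - f' (xk k)" by simp
        then have "norm (lam k o\<^sub>L g' (xk k)) \<le> norm (f' (xk k) + (lam k o\<^sub>L g' (xk k))) + norm (f' (xk k))"
          by (metis norm_triangle_ineq4)
        then show ?thesis using Bs(2)[of k] Bf(2)[of k] by linarith
      qed
      have h1: "\<bar>(lam k o\<^sub>L g' (xk k)) d\<bar> \<le> (Bs + Bf) * norm d"
      proof -
        have "\<bar>(lam k o\<^sub>L g' (xk k)) d\<bar> \<le> norm (lam k o\<^sub>L g' (xk k)) * norm d"
          using norm_blinfun[of "lam k o\<^sub>L g' (xk k)" d] by simp
        also have "\<dots> \<le> (Bs + Bf) * norm d" by (intro mult_right_mono nc) auto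
        finally show ?thesis .
      qed
      have h2: "\<bar>lam k ((g' x - g' (xk k)) d)\<bar> \<le> L * eps k * norm d"
      proof -
        have "\<bar>lam k ((g' x - g' (xk k)) d)\<bar> \<le> L * norm ((g' x - g' (xk k)) d)"
          using norm_blinfun[of "lam k" "(g' x - g' (xk k)) d"] by (simp add: L_def)
        also have "\<dots> \<le> L * (norm (g' x - g' (xk k)) * norm d)"
          by (intro mult_left_mono norm_blinfun L0)
        also have "\<dots> \<le> L * (eps k * norm d)"
          by (intro mult_left_mono mult_right_mono L0) (auto simp: eps_def)
        finally show ?thesis by (simp add: mult.assoc)
      qed
      have h3: "lam k (g x) \<ge> - Bc - L * eps k"
      proof -
        have "L * norm (g x - g (xk k)) \<le> L * eps k"
          by (intro mult_left_mono L0) (auto simp: eps_def)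
        moreover have "lam k (gm k) \<le> Bc" using Bc(2)[of k] by simp
        ultimately show ?thesis using lgx[of k] by (simp add: L_def)
      qed
      have h4: "lam k kk \<ge> 0" using lampos kk by blast
      have exp: "lam k (g' x d + t *\<^sub>R (kk + g x)) =
          (lam k o\<^sub>L g' (xk k)) d + lam k ((g' x - g' (xk k)) d) + t * lam k kk + t * lam k (g x)"
        by (simp add: blinfun.add_right blinfun.scaleR_right blinfun.diff_left blinfun.diff_right
            algebra_simps)
      have i1: "t * lam k kk \<ge> 0" using t h4 by simp
      have i2: "t * lam k (g x) \<ge> t * (- Bc - L * eps k)" by (intro mult_left_mono h3 t)
      have i3: "(Bs + Bf) * norm d \<le> B * norm d" by (intro mult_right_mono B) auto
      have i4: "t * Bc \<le> t * B" by (intro mult_left_mono B t)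
      have eq: "- ((norm d + t) * (B + L * eps k)) = - (B * norm d) - L * eps k * norm d - t * B - t * (L * eps k)"
        by (simp add: algebra_simps)
      have eq2: "t * (- Bc - L * eps k) = - (t * Bc) - t * (L * eps k)" by (simp add: algebra_simps)
      show ?thesis unfolding L_def[symmetric] exp eq
        using h1 h2 i1 i2 i3 i4 eq2 by linarith
    qed
    have repr: "\<exists>d t kk. t \<ge> 0 \<and> kk \<in> KY M e \<and> y = g' x d + t *\<^sub>R (kk + g x)" for y
    proof -
      have "y \<in> range (blinfun_apply (g' x)) + conical_hull (KY M e + {g x})" using ZK by simp
      then obtain a b where ab: "a \<in> range (blinfun_apply (g' x))" "b \<in> conical_hull (KY M e + {g x})" "y = a + b"
        by (auto elim!: set_plus_elim)
      from ab(1) obtain d where d: "a = g' x d" by auto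
      from ab(2) obtain t c where tc: "t \<ge> 0" "c \<in> KY M e + {g x}" "b = t *\<^sub>R c"
        unfolding conical_hull_def by blast
      from tc(2) obtain kk where kk: "kk \<in> KY M e" "c = kk + g x" by (auto elim!: set_plus_elim)
      show ?thesis using ab(3) d tc kk by blast
    qed
    define D where "D k = B + norm (lam k) * eps k" for k
    have D: "D k \<ge> B" for k using eps0[of k] by (simp add: D_def)
    define \<nu> where "\<nu> k = (1 / D k) *\<^sub>R lam k" for k
    have \<nu>lb: "\<exists>C. \<forall>k. \<nu> k y \<ge> - C" for y
    proof -
      obtain d t kk where r: "t \<ge> 0" "kk \<in> KY M e" "y = g' x d + t *\<^sub>R (kk + g x)" using repr by blast
      have "\<nu> k y \<ge> - (norm d + t)" for k
      proof -
        have Dp: "D k > 0" using D[of k] B by linarith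
        have "lam k y \<ge> - ((norm d + t) * D k)" using key[OF r(1,2), where k=k and d=d] r(3) by (simp add: D_def)
        then have "lam k y / D k \<ge> - (norm d + t)" using Dp by (simp add: field_simps)
        then show ?thesis by (simp add: \<nu>_def blinfun.scaleR_left divide_inverse mult.commute)
      qed
      then show ?thesis by blast
    qed
    have pw: "\<exists>C. \<forall>j. \<bar>\<nu> j y\<bar> \<le> C" for y
    proof -
      obtain C1 where C1: "\<And>k. \<nu> k y \<ge> - C1" using \<nu>lb by blast
      obtain C2 where C2: "\<And>k. \<nu> k (- y) \<ge> - C2" using \<nu>lb by blast
      have "\<bar>\<nu> j y\<bar> \<le> \<bar>C1\<bar> + \<bar>C2\<bar>" for j
        using C1[of j] C2[of j] by (simp add: blinfun.minus_right)
      then show ?thesis by blast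
    qed
    obtain M0 where M0: "\<And>j. norm (\<nu> j) \<le> M0" using uniform_bdd[OF pw] by blast
    define Mb where "Mb = \<bar>M0\<bar>"
    have Mb: "Mb \<ge> 0" "\<And>j. norm (\<nu> j) \<le> Mb" unfolding Mb_def by (auto intro: order_trans[OF M0])
    have lb: "norm (lam k) \<le> Mb * D k" for k
    proof -
      have Dp: "D k > 0" using D[of k] B by linarith
      have "norm (\<nu> k) = norm (lam k) / D k" using Dp by (simp add: \<nu>_def)
      then have "norm (lam k) = D k * norm (\<nu> k)" using Dp by (simp add: field_simps)
      also have "\<dots> \<le> D k * Mb" using Mb(2)[of k] Dp by (intro mult_left_mono) auto
      finally show ?thesis by (simp add: mult.commute)
    qed
    have "\<forall>\<^sub>F k in sequentially. eps k < 1 / (2 * Mb + 2)"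
      using order_tendstoD(2)[OF epsl] Mb by simp
    then obtain N where N: "\<And>k. k \<ge> N \<Longrightarrow> eps k < 1 / (2 * Mb + 2)"
      unfolding eventually_sequentially by blast
    have tail: "norm (lam k) \<le> 2 * Mb * B" if "k \<ge> N" for k
    proof -
      have e: "eps k * (2 * Mb + 2) < 1" using N[OF that] Mb by (simp add: field_simps)
      have "Mb * eps k \<le> 1/2"
      proof -
        have "Mb * eps k \<le> (Mb + 1) * eps k" using eps0[of k] by (simp add: algebra_simps)
        then show ?thesis using e by (simp add: algebra_simps)
      qed
      then have "norm (lam k) * (Mb * eps k) \<le> norm (lam k) * (1/2)"
        by (intro mult_left_mono) auto
      moreover have "norm (lam k) \<le> Mb * B + norm (lam k) * (Mb * eps k)"
        using lb[of k] by (simp add: D_def algebra_simps)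
      ultimately show ?thesis by linarith
    qed
    have "norm (lam k) \<le> 2 * Mb * B + (\<Sum>i<N. norm (lam i))" for k
    proof (cases "k \<ge> N")
      case True
      then show ?thesis using tail[OF True] by (simp add: sum_nonneg add_increasing2)
    next
      case False
      then have "norm (lam k) \<le> (\<Sum>i<N. norm (lam i))"
        by (intro member_le_sum) auto
      moreover have "0 \<le> 2 * Mb * B" using Mb B by simp
      ultimately show ?thesis by linarith
    qed
    then show "bounded (range lam)" unfolding bounded_iff by blast
  next
    assume H: "(\<exists>a :: 'y \<Rightarrow> 'y. (\<forall>y. AE w in M. e (a y) w = \<bar>e y w\<bar>) \<and> continuous_on UNIV a)
            \<and> dual_ball_weakstar_seq_compact TYPE('y \<Rightarrow>\<^sub>L real)
            \<and> bounded (range lam)"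
    have bl: "bounded (range lam)" using H[THEN conjunct2, THEN conjunct2] .
    then obtain R where R: "R > 0" "\<And>k. norm (lam k) \<le> R" unfolding bounded_pos by blast
    have cpt: "\<forall>\<mu> :: nat \<Rightarrow> ('y \<Rightarrow>\<^sub>L real). (\<forall>n. norm (\<mu> n) \<le> 1) \<longrightarrow>
        (\<exists>r \<mu>0. strict_mono r \<and> norm \<mu>0 \<le> 1 \<and>
           (\<forall>y. (\<lambda>n. blinfun_apply (\<mu> (r n)) y) \<longlonglongrightarrow> blinfun_apply \<mu>0 y))"
      using H[THEN conjunct2, THEN conjunct1] unfolding dual_ball_weakstar_seq_compact_def by assumption
    have n1: "\<forall>n. norm ((\<lambda>k. (1/R) *\<^sub>R lam k) n) \<le> 1"
    proof
      fix n
      have "norm ((1/R) *\<^sub>R lam n) = norm (lam n) / R" using R by simp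
      also have "\<dots> \<le> 1" using R(2)[of n] R(1) by simp
      finally show "norm ((\<lambda>k. (1/R) *\<^sub>R lam k) n) \<le> 1" by simp
    qed
    have "\<exists>r \<mu>0. strict_mono r \<and> norm \<mu>0 \<le> 1 \<and>
           (\<forall>y. (\<lambda>n. blinfun_apply ((\<lambda>k. (1/R) *\<^sub>R lam k) (r n)) y) \<longlonglongrightarrow> blinfun_apply \<mu>0 y)"
      by (rule mp[OF spec[OF cpt, of "\<lambda>k. (1/R) *\<^sub>R lam k"] n1])
    then obtain r \<mu>0 where r: "strict_mono r"
      and conv00: "\<forall>y. (\<lambda>n. blinfun_apply ((\<lambda>k. (1/R) *\<^sub>R lam k) (r n)) y) \<longlonglongrightarrow> blinfun_apply \<mu>0 y"
      by blast
    have conv0: "(\<lambda>n. lam (r n) y / R) \<longlonglongrightarrow> \<mu>0 y" for y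
    proof -
      have e: "((1/R) *\<^sub>R lam (r n)) y = lam (r n) y / R" for n by (simp add: blinfun.scaleR_left divide_inverse mult.commute)
      show ?thesis using conv00[rule_format, of y] unfolding e .
    qed
    define \<mu> where "\<mu> = R *\<^sub>R \<mu>0"
    have conv: "(\<lambda>n. lam (r n) y) \<longlonglongrightarrow> \<mu> y" for y
    proof -
      have "(\<lambda>n. R * (lam (r n) y / R)) \<longlonglongrightarrow> R * \<mu>0 y"
        by (intro tendsto_mult_left conv0)
      then show ?thesis using R by (simp add: \<mu>_def blinfun.scaleR_left)
    qed
    have muK: "\<mu> \<in> KY_plus M e"
      unfolding KY_plus_def
    proof safe
      fix y assume "y \<in> KY M e"
      then show "\<mu> y \<ge> 0" using lampos
        by (intro LIMSEQ_le_const[OF conv] exI[of _ 0] allI impI) auto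
    qed
    have stat0: "f' x + (\<mu> o\<^sub>L g' x) = 0"
    proof (rule blinfun_eqI)
      fix d
      have s1: "(\<lambda>n. (f' (xk (r n)) + (lam (r n) o\<^sub>L g' (xk (r n)))) d) \<longlonglongrightarrow> 0"
        using blinfun.tendsto[OF LIMSEQ_subseq_LIMSEQ[OF stat r] tendsto_const[of d]] by (simp add: o_def)
      have s2: "(\<lambda>n. f' (xk (r n)) d) \<longlonglongrightarrow> f' x d"
        using blinfun.tendsto[OF LIMSEQ_subseq_LIMSEQ[OF f'xk r] tendsto_const[of d]] by (simp add: o_def)
      have s3: "(\<lambda>n. lam (r n) (g' (xk (r n)) d) - lam (r n) (g' x d)) \<longlonglongrightarrow> 0"
      proof (rule Lim_null_comparison)
        show "\<forall>\<^sub>F n in sequentially. norm (lam (r n) (g' (xk (r n)) d) - lam (r n) (g' x d))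
               \<le> R * (norm (g' (xk (r n)) - g' x) * norm d)"
        proof (intro always_eventually allI)
          fix n
          have "norm (lam (r n) (g' (xk (r n)) d) - lam (r n) (g' x d))
              = norm (lam (r n) ((g' (xk (r n)) - g' x) d))"
            by (simp add: blinfun.diff_right blinfun.diff_left)
          also have "\<dots> \<le> norm (lam (r n)) * norm ((g' (xk (r n)) - g' x) d)" by (rule norm_blinfun)
          also have "\<dots> \<le> R * (norm (g' (xk (r n)) - g' x) * norm d)"
            by (rule mult_mono[OF R(2) norm_blinfun]) (use R in auto)
          finally show "norm (lam (r n) (g' (xk (r n)) d) - lam (r n) (g' x d))
               \<le> R * (norm (g' (xk (r n)) - g' x) * norm d)" .
        qed
        have "(\<lambda>n. g' (xk (r n))) \<longlonglongrightarrow> g' x"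
          using LIMSEQ_subseq_LIMSEQ[OF g'xk r] by (simp add: o_def)
        then have "(\<lambda>n. norm (g' (xk (r n)) - g' x)) \<longlonglongrightarrow> 0"
          by (intro tendsto_norm_zero) (simp add: LIM_zero_iff)
        then have "(\<lambda>n. R * (norm (g' (xk (r n)) - g' x) * norm d)) \<longlonglongrightarrow> R * (0 * norm d)"
          by (intro tendsto_intros)
        then show "(\<lambda>n. R * (norm (g' (xk (r n)) - g' x) * norm d)) \<longlonglongrightarrow> 0" by simp
      qed
      have "(\<lambda>n. f' (xk (r n)) d + (lam (r n) (g' (xk (r n)) d) - lam (r n) (g' x d)) + lam (r n) (g' x d))
             \<longlonglongrightarrow> f' x d + 0 + \<mu> (g' x d)"
        by (intro tendsto_add s2 s3 conv)
      moreover have "(\<lambda>n. f' (xk (r n)) d + (lam (r n) (g' (xk (r n)) d) - lam (r n) (g' x d)) + lam (r n) (g' x d))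
          = (\<lambda>n. (f' (xk (r n)) + (lam (r n) o\<^sub>L g' (xk (r n)))) d)"
        by (simp add: blinfun.add_left)
      ultimately have "f' x d + 0 + \<mu> (g' x d) = 0" using s1 LIMSEQ_unique by auto
      then show "(f' x + (\<mu> o\<^sub>L g' x)) d = blinfun_apply 0 d" by (simp add: blinfun.add_left)
    qed
    have le: "\<mu> (g x) \<le> 0"
    proof -
      have "\<mu> (- g x) \<ge> 0" using muK gmx by (auto simp: KY_plus_def)
      then show ?thesis by (simp add: blinfun.minus_right)
    qed
    have ge: "\<mu> (g x) \<ge> 0"
    proof (rule tendsto_le[OF _ conv])
      show "sequentially \<noteq> bot" by simp
      have c1: "(\<lambda>n. lam (r n) (gm (r n))) \<longlonglongrightarrow> 0"
        using LIMSEQ_subseq_LIMSEQ[OF compl r] by (simp add: o_def)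
      have "(\<lambda>n. g (xk (r n))) \<longlonglongrightarrow> g x"
        using LIMSEQ_subseq_LIMSEQ[OF gxk r] by (simp add: o_def)
      then have c2: "(\<lambda>n. norm (g x - g (xk (r n)))) \<longlonglongrightarrow> 0"
      proof -
        have "(\<lambda>n. g x - g (xk (r n))) \<longlonglongrightarrow> g x - g x"
          by (intro tendsto_diff tendsto_const) fact
        then show ?thesis using tendsto_norm_zero by fastforce
      qed
      have "(\<lambda>n. - lam (r n) (gm (r n)) - R * norm (g x - g (xk (r n)))) \<longlonglongrightarrow> - 0 - R * 0"
        by (intro tendsto_intros c1 c2)
      then show "(\<lambda>n. - lam (r n) (gm (r n)) - R * norm (g x - g (xk (r n)))) \<longlonglongrightarrow> 0" by simp
      show "\<forall>\<^sub>F n in sequentially. - lam (r n) (gm (r n)) - R * norm (g x - g (xk (r n))) \<le> lam (r n) (g x)"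
      proof (intro always_eventually allI)
        fix n
        have "norm (lam (r n)) * norm (g x - g (xk (r n))) \<le> R * norm (g x - g (xk (r n)))"
          by (intro mult_right_mono R) auto
        then show "- lam (r n) (gm (r n)) - R * norm (g x - g (xk (r n))) \<le> lam (r n) (g x)"
          using lgx[of "r n"] by linarith
      qed
    qed
    show "\<exists>\<mu> \<in> KY_plus M e. f' x + (\<mu> o\<^sub>L g' x) = 0 \<and> Yle0 M e (g x) \<and> blinfun_apply \<mu> (g x) = 0"
      using muK stat0 feasible le ge by (intro bexI[of _ \<mu>]) auto
  qed
qed

end
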